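(* Let $\mathbb C$ be a pointed category with finite limits and finite colimits. The forgetful functor $\mathsf{MCS}_W(\mathbb C)\to\mathsf{CS}_W(\mathbb C)$ has a left adjoint, which sends a weighted cospan $C=(A,X,x,Y,y,W,w)$ to $((\tilde C,X,\nu_Cx,Y,\nu_Cy,W,\nu_Cw),\mu_C)$, where $$\begin{array}{ccc} W+X+Y & \xrightarrow{[w,x,y]} & A\\ \downarrow{\scriptstyle\langle [\iota_1,\iota_2,0],[\iota_1,0,\iota_2]\rangle} & & \downarrow{\scriptstyle \nu_C}\\ (W+X)\times_W(W+Y) & \xrightarrow{\mu_C} & \tilde C\end{array}$$ is a pushout; the $C$-component of the unit of the adjunction consists of the identity morphisms of $X$, $Y$, $W$ and the morphism $\nu_C\colon A\to\tilde C$.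
   Context: Notation: $\iota_i$ coproduct injections, $[a,b]$, $[a,b,c]$ copairings, $\langle a,b\rangle$ pairing; $(W+X)\times_W(W+Y)$ is the pullback of $[1,0]\colon W+X\to W$ and $[1,0]\colon W+Y\to W$. A weighted cospan $(A,X,x,Y,y,W,w)$ consists of morphisms $w\colon W\to A$, $x\colon X\to A$, $y\colon Y\to A$; a morphism of weighted cospans $(A,X,x,Y,y,W,w)\to(A',X',x',Y',y',W',w')$ is a quadruple of morphisms $a\colon A\to A'$, $f\colon X\to X'$, $g\colon Y\to Y'$, $h\colon W\to W'$ with $af=$ ... precisely $x'f=ax$, $y'g=ay$, $w'h=aw$; these form the category $\mathsf{CS}_W(\mathbb C)$. An internal multiplication $X\times Y\to A$ over $(W,w)$ is a morphism $m\colon (W+X)\times_W(W+Y)\to A$ with $m\langle 1,\iota_1[1,0]\rangle=[w,x]$ and $m\langle \iota_1[1,0],1\rangle=[w,y]$. A multiplicative weighted cospan is a pair $(C,m)$ with $C$ a weighted cospan and $m$ such an internal multiplication; a morphism $(C,m)\to(C',m')$ is a morphism $(a,f,g,h)$ of weighted cospans with $am=m'\circ((h+f)\times_h(h+g))$. These form the category $\mathsf{MCS}_W(\mathbb C)$, with the forgetful functor $(C,m)\mapsto C$. *)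

theory Defs
  imports Main
begin

record ('o,'m) cat =
  Obj  :: "'o set"
  Arr  :: "'m set"
  Dom  :: "'m \<Rightarrow> 'o"
  Cod  :: "'m \<Rightarrow> 'o"
  Id   :: "'o \<Rightarrow> 'm"
  Comp :: "'m \<Rightarrow> 'm \<Rightarrow> 'm"   (* Comp C g f = g \<circ> f *)

definition hom :: "('o,'m) cat \<Rightarrow> 'o \<Rightarrow> 'o \<Rightarrow> 'm set" where
  "hom C a b = {f \<in> Arr C. Dom C f = a \<and> Cod C f = b}"

definition category :: "('o,'m) cat \<Rightarrow> bool" where
  "category C \<longleftrightarrow>
     (\<forall>f\<in>Arr C. Dom C f \<in> Obj C \<and> Cod C f \<in> Obj C) \<and>
     (\<forall>a\<in>Obj C. Id C a \<in> hom C a a) \<and>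
     (\<forall>f\<in>Arr C. \<forall>g\<in>Arr C. Cod C f = Dom C g \<longrightarrow>
         Comp C g f \<in> hom C (Dom C f) (Cod C g)) \<and>
     (\<forall>f\<in>Arr C. Comp C (Id C (Cod C f)) f = f \<and> Comp C f (Id C (Dom C f)) = f) \<and>
     (\<forall>f\<in>Arr C. \<forall>g\<in>Arr C. \<forall>h\<in>Arr C. Cod C f = Dom C g \<longrightarrow> Cod C g = Dom C h \<longrightarrow>
         Comp C h (Comp C g f) = Comp C (Comp C h g) f)"

definition is_zero_obj :: "('o,'m) cat \<Rightarrow> 'o \<Rightarrow> bool" where
  "is_zero_obj C z \<longleftrightarrow> z \<in> Obj C \<and>
     (\<forall>a\<in>Obj C. (\<exists>!f. f \<in> hom C a z) \<and> (\<exists>!f. f \<in> hom C z a))"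

definition pointed :: "('o,'m) cat \<Rightarrow> bool" where
  "pointed C \<longleftrightarrow> (\<exists>z. is_zero_obj C z)"

definition zero_map :: "('o,'m) cat \<Rightarrow> 'o \<Rightarrow> 'o \<Rightarrow> 'm" where
  "zero_map C a b = (SOME f. f \<in> hom C a b \<and>
      (\<exists>z g k. is_zero_obj C z \<and> g \<in> hom C a z \<and> k \<in> hom C z b \<and> f = Comp C k g))"

definition is_terminal :: "('o,'m) cat \<Rightarrow> 'o \<Rightarrow> bool" where
  "is_terminal C t \<longleftrightarrow> t \<in> Obj C \<and> (\<forall>a\<in>Obj C. \<exists>!f. f \<in> hom C a t)"

definition is_initial :: "('o,'m) cat \<Rightarrow> 'o \<Rightarrow> bool" where
  "is_initial C t \<longleftrightarrow> t \<in> Obj C \<and> (\<forall>a\<in>Obj C. \<exists>!f. f \<in> hom C t a)"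

definition is_pullback :: "('o,'m) cat \<Rightarrow> 'm \<Rightarrow> 'm \<Rightarrow> 'o \<times> 'm \<times> 'm \<Rightarrow> bool" where
  "is_pullback C f g r \<longleftrightarrow> (case r of (p, p1, p2) \<Rightarrow>
     f \<in> Arr C \<and> g \<in> Arr C \<and> Cod C f = Cod C g \<and> p \<in> Obj C \<and>
     p1 \<in> hom C p (Dom C f) \<and> p2 \<in> hom C p (Dom C g) \<and>
     Comp C f p1 = Comp C g p2 \<and>
     (\<forall>q u v. u \<in> hom C q (Dom C f) \<longrightarrow> v \<in> hom C q (Dom C g) \<longrightarrow>
        Comp C f u = Comp C g v \<longrightarrow>
        (\<exists>!t. t \<in> hom C q p \<and> Comp C p1 t = u \<and> Comp C p2 t = v)))"

definition is_pushout :: "('o,'m) cat \<Rightarrow> 'm \<Rightarrow> 'm \<Rightarrow> 'o \<times> 'm \<times> 'm \<Rightarrow> bool" where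
  "is_pushout C f g r \<longleftrightarrow> (case r of (p, q1, q2) \<Rightarrow>
     f \<in> Arr C \<and> g \<in> Arr C \<and> Dom C f = Dom C g \<and> p \<in> Obj C \<and>
     q1 \<in> hom C (Cod C f) p \<and> q2 \<in> hom C (Cod C g) p \<and>
     Comp C q1 f = Comp C q2 g \<and>
     (\<forall>q u v. u \<in> hom C (Cod C f) q \<longrightarrow> v \<in> hom C (Cod C g) q \<longrightarrow>
        Comp C u f = Comp C v g \<longrightarrow>
        (\<exists>!t. t \<in> hom C p q \<and> Comp C t q1 = u \<and> Comp C t q2 = v)))"

text \<open>Finite limits = terminal object + pullbacks; finite colimits dually.\<close>
definition has_finite_limits :: "('o,'m) cat \<Rightarrow> bool" where
  "has_finite_limits C \<longleftrightarrow> (\<exists>t. is_terminal C t) \<and>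
     (\<forall>f\<in>Arr C. \<forall>g\<in>Arr C. Cod C f = Cod C g \<longrightarrow> (\<exists>r. is_pullback C f g r))"

definition has_finite_colimits :: "('o,'m) cat \<Rightarrow> bool" where
  "has_finite_colimits C \<longleftrightarrow> (\<exists>t. is_initial C t) \<and>
     (\<forall>f\<in>Arr C. \<forall>g\<in>Arr C. Dom C f = Dom C g \<longrightarrow> (\<exists>r. is_pushout C f g r))"

definition is_coproduct :: "('o,'m) cat \<Rightarrow> 'o \<Rightarrow> 'o \<Rightarrow> 'o \<times> 'm \<times> 'm \<Rightarrow> bool" where
  "is_coproduct C a b r \<longleftrightarrow> (case r of (p, i1, i2) \<Rightarrow>
     p \<in> Obj C \<and> i1 \<in> hom C a p \<and> i2 \<in> hom C b p \<and>
     (\<forall>c f g. f \<in> hom C a c \<longrightarrow> g \<in> hom C b c \<longrightarrow>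
        (\<exists>!u. u \<in> hom C p c \<and> Comp C u i1 = f \<and> Comp C u i2 = g)))"

definition is_coproduct3 :: "('o,'m) cat \<Rightarrow> 'o \<Rightarrow> 'o \<Rightarrow> 'o \<Rightarrow> 'o \<times> 'm \<times> 'm \<times> 'm \<Rightarrow> bool" where
  "is_coproduct3 C a b d r \<longleftrightarrow> (case r of (p, i1, i2, i3) \<Rightarrow>
     p \<in> Obj C \<and> i1 \<in> hom C a p \<and> i2 \<in> hom C b p \<and> i3 \<in> hom C d p \<and>
     (\<forall>c f g k. f \<in> hom C a c \<longrightarrow> g \<in> hom C b c \<longrightarrow> k \<in> hom C d c \<longrightarrow>
        (\<exists>!u. u \<in> hom C p c \<and> Comp C u i1 = f \<and> Comp C u i2 = g \<and> Comp C u i3 = k)))"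

definition cop :: "('o,'m) cat \<Rightarrow> 'o \<Rightarrow> 'o \<Rightarrow> 'o \<times> 'm \<times> 'm" where
  "cop C a b = (SOME r. is_coproduct C a b r)"

definition copObj :: "('o,'m) cat \<Rightarrow> 'o \<Rightarrow> 'o \<Rightarrow> 'o" where
  "copObj C a b = fst (cop C a b)"
definition inj1 :: "('o,'m) cat \<Rightarrow> 'o \<Rightarrow> 'o \<Rightarrow> 'm" where
  "inj1 C a b = fst (snd (cop C a b))"
definition inj2 :: "('o,'m) cat \<Rightarrow> 'o \<Rightarrow> 'o \<Rightarrow> 'm" where
  "inj2 C a b = snd (snd (cop C a b))"

definition copair :: "('o,'m) cat \<Rightarrow> 'm \<Rightarrow> 'm \<Rightarrow> 'm" where
  "copair C f g = (THE u. u \<in> hom C (copObj C (Dom C f) (Dom C g)) (Cod C f) \<and>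
      Comp C u (inj1 C (Dom C f) (Dom C g)) = f \<and> Comp C u (inj2 C (Dom C f) (Dom C g)) = g)"

definition copmap :: "('o,'m) cat \<Rightarrow> 'm \<Rightarrow> 'm \<Rightarrow> 'm" where
  "copmap C h f = copair C (Comp C (inj1 C (Cod C h) (Cod C f)) h)
                           (Comp C (inj2 C (Cod C h) (Cod C f)) f)"

definition codiag :: "('o,'m) cat \<Rightarrow> 'o \<Rightarrow> 'o \<Rightarrow> 'm" where
  "codiag C W X = copair C (Id C W) (zero_map C X W)"

definition pb :: "('o,'m) cat \<Rightarrow> 'm \<Rightarrow> 'm \<Rightarrow> 'o \<times> 'm \<times> 'm" where
  "pb C f g = (SOME r. is_pullback C f g r)"

text \<open>(W+X) \<times>_W (W+Y) and its two projections.\<close>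
definition PB :: "('o,'m) cat \<Rightarrow> 'o \<Rightarrow> 'o \<Rightarrow> 'o \<Rightarrow> 'o" where
  "PB C W X Y = fst (pb C (codiag C W X) (codiag C W Y))"
definition pr1 :: "('o,'m) cat \<Rightarrow> 'o \<Rightarrow> 'o \<Rightarrow> 'o \<Rightarrow> 'm" where
  "pr1 C W X Y = fst (snd (pb C (codiag C W X) (codiag C W Y)))"
definition pr2 :: "('o,'m) cat \<Rightarrow> 'o \<Rightarrow> 'o \<Rightarrow> 'o \<Rightarrow> 'm" where
  "pr2 C W X Y = snd (snd (pb C (codiag C W X) (codiag C W Y)))"

definition pbpair :: "('o,'m) cat \<Rightarrow> 'o \<Rightarrow> 'o \<Rightarrow> 'o \<Rightarrow> 'm \<Rightarrow> 'm \<Rightarrow> 'm" where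
  "pbpair C W X Y u v = (THE t. t \<in> hom C (Dom C u) (PB C W X Y) \<and>
      Comp C (pr1 C W X Y) t = u \<and> Comp C (pr2 C W X Y) t = v)"

record ('o,'m) wcs =
  apex :: 'o
  lobj :: 'o
  lmap :: 'm
  robj :: 'o
  rmap :: 'm
  wobj :: 'o
  wmap :: 'm

record 'm wcsmor =
  ma :: 'm
  mf :: 'm
  mg :: 'm
  mh :: 'm

definition wcospan :: "('o,'m) cat \<Rightarrow> ('o,'m) wcs \<Rightarrow> bool" where
  "wcospan C c \<longleftrightarrow> apex c \<in> Obj C \<and> lmap c \<in> hom C (lobj c) (apex c) \<and>
     rmap c \<in> hom C (robj c) (apex c) \<and> wmap c \<in> hom C (wobj c) (apex c)"

definition cs_mor :: "('o,'m) cat \<Rightarrow> ('o,'m) wcs \<Rightarrow> ('o,'m) wcs \<Rightarrow> 'm wcsmor \<Rightarrow> bool" where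
  "cs_mor C c c' \<phi> \<longleftrightarrow> wcospan C c \<and> wcospan C c' \<and>
     ma \<phi> \<in> hom C (apex c) (apex c') \<and> mf \<phi> \<in> hom C (lobj c) (lobj c') \<and>
     mg \<phi> \<in> hom C (robj c) (robj c') \<and> mh \<phi> \<in> hom C (wobj c) (wobj c') \<and>
     Comp C (lmap c') (mf \<phi>) = Comp C (ma \<phi>) (lmap c) \<and>
     Comp C (rmap c') (mg \<phi>) = Comp C (ma \<phi>) (rmap c) \<and>
     Comp C (wmap c') (mh \<phi>) = Comp C (ma \<phi>) (wmap c)"

definition cs_comp :: "('o,'m) cat \<Rightarrow> 'm wcsmor \<Rightarrow> 'm wcsmor \<Rightarrow> 'm wcsmor" where
  "cs_comp C \<psi> \<phi> = \<lparr>ma = Comp C (ma \<psi>) (ma \<phi>), mf = Comp C (mf \<psi>) (mf \<phi>),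
                      mg = Comp C (mg \<psi>) (mg \<phi>), mh = Comp C (mh \<psi>) (mh \<phi>)\<rparr>"

definition internal_mult :: "('o,'m) cat \<Rightarrow> ('o,'m) wcs \<Rightarrow> 'm \<Rightarrow> bool" where
  "internal_mult C c m \<longleftrightarrow>
     (let W = wobj c; X = lobj c; Y = robj c in
       m \<in> hom C (PB C W X Y) (apex c) \<and>
       Comp C m (pbpair C W X Y (Id C (copObj C W X))
                   (Comp C (inj1 C W Y) (codiag C W X))) = copair C (wmap c) (lmap c) \<and>
       Comp C m (pbpair C W X Y (Comp C (inj1 C W X) (codiag C W Y))
                   (Id C (copObj C W Y))) = copair C (wmap c) (rmap c))"

definition mcs :: "('o,'m) cat \<Rightarrow> ('o,'m) wcs \<Rightarrow> 'm \<Rightarrow> bool" where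
  "mcs C c m \<longleftrightarrow> wcospan C c \<and> internal_mult C c m"

definition pbmap :: "('o,'m) cat \<Rightarrow> ('o,'m) wcs \<Rightarrow> ('o,'m) wcs \<Rightarrow> 'm wcsmor \<Rightarrow> 'm" where
  "pbmap C c c' \<phi> = pbpair C (wobj c') (lobj c') (robj c')
      (Comp C (copmap C (mh \<phi>) (mf \<phi>)) (pr1 C (wobj c) (lobj c) (robj c)))
      (Comp C (copmap C (mh \<phi>) (mg \<phi>)) (pr2 C (wobj c) (lobj c) (robj c)))"

definition mcs_mor :: "('o,'m) cat \<Rightarrow> ('o,'m) wcs \<Rightarrow> 'm \<Rightarrow> ('o,'m) wcs \<Rightarrow> 'm \<Rightarrow> 'm wcsmor \<Rightarrow> bool" where
  "mcs_mor C c m c' m' \<phi> \<longleftrightarrow> mcs C c m \<and> mcs C c' m' \<and> cs_mor C c c' \<phi> \<and>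
     Comp C (ma \<phi>) m = Comp C m' (pbmap C c c' \<phi>)"

end

theory Submission
  imports Defs
begin


lemma ex1_eq: "\<exists>!x. P x \<Longrightarrow> P a \<Longrightarrow> P b \<Longrightarrow> a = b" by blast

locale cctx =
  fixes C :: "('o,'m) cat"
  assumes cat: "category C" and pt: "pointed C"
    and fl: "has_finite_limits C" and fc: "has_finite_colimits C"
begin

abbreviation cmp (infixr "\<cdot>" 80) where "g \<cdot> f \<equiv> Comp C g f"

lemma homD: "f \<in> hom C a b \<Longrightarrow> f \<in> Arr C \<and> Dom C f = a \<and> Cod C f = b"
  by (simp add: hom_def)

lemma cat_parts:
  "\<forall>f\<in>Arr C. Dom C f \<in> Obj C \<and> Cod C f \<in> Obj C"
  "\<forall>a\<in>Obj C. Id C a \<in> hom C a a"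
  "\<forall>f\<in>Arr C. \<forall>g\<in>Arr C. Cod C f = Dom C g \<longrightarrow> Comp C g f \<in> hom C (Dom C f) (Cod C g)"
  "\<forall>f\<in>Arr C. Comp C (Id C (Cod C f)) f = f \<and> Comp C f (Id C (Dom C f)) = f"
  "\<forall>f\<in>Arr C. \<forall>g\<in>Arr C. \<forall>h\<in>Arr C. Cod C f = Dom C g \<longrightarrow> Cod C g = Dom C h \<longrightarrow>
         Comp C h (Comp C g f) = Comp C (Comp C h g) f"
  using cat unfolding category_def by blast+

lemma hom_obj: "f \<in> hom C a b \<Longrightarrow> a \<in> Obj C \<and> b \<in> Obj C"
  using cat_parts(1) homD by metis

lemma comp_hom: "f \<in> hom C a b \<Longrightarrow> g \<in> hom C b c \<Longrightarrow> g \<cdot> f \<in> hom C a c"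
  using cat_parts(3) homD by metis

lemma id_hom: "a \<in> Obj C \<Longrightarrow> Id C a \<in> hom C a a"
  using cat_parts(2) by blast

lemma id_left: "f \<in> hom C a b \<Longrightarrow> Id C b \<cdot> f = f"
  using cat_parts(4) homD by metis

lemma id_right: "f \<in> hom C a b \<Longrightarrow> f \<cdot> Id C a = f"
  using cat_parts(4) homD by metis

lemma assoc: "f \<in> hom C a b \<Longrightarrow> g \<in> hom C b c \<Longrightarrow> k \<in> hom C c d \<Longrightarrow> k \<cdot> (g \<cdot> f) = (k \<cdot> g) \<cdot> f"
  using cat_parts(5) homD by metis

lemma cop_ex: assumes "a \<in> Obj C" "b \<in> Obj C" shows "\<exists>r. is_coproduct C a b r"
proof -
  obtain i where i: "is_initial C i" using fc unfolding has_finite_colimits_def by blast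
  obtain ia where ia: "ia \<in> hom C i a" using i assms unfolding is_initial_def by blast
  obtain ib where ib: "ib \<in> hom C i b" using i assms unfolding is_initial_def by blast
  have "ia \<in> Arr C" "ib \<in> Arr C" "Dom C ia = Dom C ib" using ia ib homD by auto
  then obtain r where r: "is_pushout C ia ib r"
    using fc unfolding has_finite_colimits_def by blast
  obtain p q1 q2 where rr: "r = (p,q1,q2)" by (cases r) auto
  have ca: "Cod C ia = a" and cb: "Cod C ib = b" using ia ib homD by auto
  have r2: "p \<in> Obj C \<and> q1 \<in> hom C a p \<and> q2 \<in> hom C b p \<and>
     (\<forall>q u v. u \<in> hom C a q \<longrightarrow> v \<in> hom C b q \<longrightarrow>
        u \<cdot> ia = v \<cdot> ib \<longrightarrow> (\<exists>!t. t \<in> hom C p q \<and> t \<cdot> q1 = u \<and> t \<cdot> q2 = v))"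
    using r unfolding rr is_pushout_def prod.case ca cb by blast
  have "is_coproduct C a b (p,q1,q2)"
    unfolding is_coproduct_def prod.case
  proof (intro conjI allI impI)
    show "p \<in> Obj C" "q1 \<in> hom C a p" "q2 \<in> hom C b p" using r2 by blast+
  next
    fix c f g assume f: "f \<in> hom C a c" and g: "g \<in> hom C b c"
    have "f \<cdot> ia \<in> hom C i c" "g \<cdot> ib \<in> hom C i c" using comp_hom f g ia ib by auto
    moreover have "c \<in> Obj C" using hom_obj f by blast
    ultimately have "f \<cdot> ia = g \<cdot> ib" using i unfolding is_initial_def by blast
    then show "\<exists>!u. u \<in> hom C p c \<and> u \<cdot> q1 = f \<and> u \<cdot> q2 = g"
      using r2 f g by blast
  qed
  then show ?thesis by blast
qed

lemma cop_eq: "cop C a b = (copObj C a b, inj1 C a b, inj2 C a b)"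
  by (simp add: copObj_def inj1_def inj2_def)

lemma cop_ok: assumes "a \<in> Obj C" "b \<in> Obj C"
  shows "is_coproduct C a b (copObj C a b, inj1 C a b, inj2 C a b)"
proof -
  have "is_coproduct C a b (cop C a b)" unfolding cop_def by (rule someI_ex[OF cop_ex[OF assms]])
  then show ?thesis by (simp only: cop_eq)
qed

lemma cop_parts: assumes "a \<in> Obj C" "b \<in> Obj C"
  shows "copObj C a b \<in> Obj C" "inj1 C a b \<in> hom C a (copObj C a b)" "inj2 C a b \<in> hom C b (copObj C a b)"
    "\<And>c f g. f \<in> hom C a c \<Longrightarrow> g \<in> hom C b c \<Longrightarrow>
        (\<exists>!u. u \<in> hom C (copObj C a b) c \<and> u \<cdot> inj1 C a b = f \<and> u \<cdot> inj2 C a b = g)"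
  using cop_ok[OF assms] unfolding is_coproduct_def prod.case by blast+

lemma cop_obj: "a \<in> Obj C \<Longrightarrow> b \<in> Obj C \<Longrightarrow> copObj C a b \<in> Obj C"
  using cop_parts(1) .
lemma inj1_hom: "a \<in> Obj C \<Longrightarrow> b \<in> Obj C \<Longrightarrow> inj1 C a b \<in> hom C a (copObj C a b)"
  using cop_parts(2) .
lemma inj2_hom: "a \<in> Obj C \<Longrightarrow> b \<in> Obj C \<Longrightarrow> inj2 C a b \<in> hom C b (copObj C a b)"
  using cop_parts(3) .

lemma copair_prop: assumes f: "f \<in> hom C a c" and g: "g \<in> hom C b c"
  shows "copair C f g \<in> hom C (copObj C a b) c \<and> copair C f g \<cdot> inj1 C a b = f \<and> copair C f g \<cdot> inj2 C a b = g"
proof -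
  have ob: "a \<in> Obj C" "b \<in> Obj C" using f g hom_obj by auto
  have ex: "\<exists>!u. u \<in> hom C (copObj C a b) c \<and> u \<cdot> inj1 C a b = f \<and> u \<cdot> inj2 C a b = g"
    using cop_parts(4)[OF ob f g] .
  have df: "Dom C f = a" "Dom C g = b" "Cod C f = c" using f g homD by auto
  have "copair C f g = (THE u. u \<in> hom C (copObj C a b) c \<and> u \<cdot> inj1 C a b = f \<and> u \<cdot> inj2 C a b = g)"
    unfolding copair_def df ..
  then show ?thesis using theI'[OF ex] by simp
qed

lemma cop_unique: assumes "a \<in> Obj C" "b \<in> Obj C" "u \<in> hom C (copObj C a b) c" "u' \<in> hom C (copObj C a b) c"
  "u \<cdot> inj1 C a b = u' \<cdot> inj1 C a b" "u \<cdot> inj2 C a b = u' \<cdot> inj2 C a b"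
  shows "u = u'"
proof -
  have f: "u \<cdot> inj1 C a b \<in> hom C a c" by (rule comp_hom[OF inj1_hom[OF assms(1,2)] assms(3)])
  have g: "u \<cdot> inj2 C a b \<in> hom C b c" by (rule comp_hom[OF inj2_hom[OF assms(1,2)] assms(3)])
  have "\<exists>!t. t \<in> hom C (copObj C a b) c \<and> t \<cdot> inj1 C a b = u \<cdot> inj1 C a b \<and> t \<cdot> inj2 C a b = u \<cdot> inj2 C a b"
    using cop_parts(4)[OF assms(1,2) f g] .
  moreover have "u \<in> hom C (copObj C a b) c \<and> u \<cdot> inj1 C a b = u \<cdot> inj1 C a b \<and> u \<cdot> inj2 C a b = u \<cdot> inj2 C a b"
    using assms(3) by simp
  moreover have "u' \<in> hom C (copObj C a b) c \<and> u' \<cdot> inj1 C a b = u \<cdot> inj1 C a b \<and> u' \<cdot> inj2 C a b = u \<cdot> inj2 C a b"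
    using assms(4-6) by simp
  ultimately show ?thesis by (rule ex1_eq)
qed

lemma zero_unique: assumes z: "is_zero_obj C z" and g: "g \<in> hom C a z" and k: "k \<in> hom C z b"
  shows "zero_map C a b = k \<cdot> g"
proof -
  let ?P = "\<lambda>f. f \<in> hom C a b \<and> (\<exists>z g k. is_zero_obj C z \<and> g \<in> hom C a z \<and> k \<in> hom C z b \<and> f = k \<cdot> g)"
  have "?P (k \<cdot> g)" using z g k comp_hom by blast
  moreover have "f = k \<cdot> g" if Pf: "?P f" for f
  proof -
    obtain z' g' k' where z': "is_zero_obj C z'" and g': "g' \<in> hom C a z'" and k': "k' \<in> hom C z' b"
      and fe: "f = k' \<cdot> g'" using Pf by blast
    have z'o: "z' \<in> Obj C" using z' unfolding is_zero_obj_def by blast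
    obtain u where u: "u \<in> hom C z' z" using z z'o unfolding is_zero_obj_def by metis
    have ao: "a \<in> Obj C" and bo: "b \<in> Obj C" using g k hom_obj by auto
    have "u \<cdot> g' \<in> hom C a z" using comp_hom u g' by blast
    then have e1: "u \<cdot> g' = g" using z g ao unfolding is_zero_obj_def by blast
    have "k \<cdot> u \<in> hom C z' b" using comp_hom u k by blast
    then have e2: "k \<cdot> u = k'" using z' k' bo unfolding is_zero_obj_def by blast
    have "k \<cdot> (u \<cdot> g') = (k \<cdot> u) \<cdot> g'" using assoc g' u k by blast
    then show ?thesis using e1 e2 fe by simp
  qed
  ultimately show ?thesis unfolding zero_map_def by (rule some_equality)
qed

lemma zero_ex: obtains z where "is_zero_obj C z" using pt unfolding pointed_def by blast

lemma zero_fac: assumes "a \<in> Obj C" "b \<in> Obj C"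
  obtains z g k where "is_zero_obj C z" "g \<in> hom C a z" "k \<in> hom C z b" "zero_map C a b = k \<cdot> g"
proof -
  obtain z where z: "is_zero_obj C z" using zero_ex by blast
  obtain g where "g \<in> hom C a z" using z assms unfolding is_zero_obj_def by blast
  moreover obtain k where "k \<in> hom C z b" using z assms unfolding is_zero_obj_def by blast
  ultimately show ?thesis using that z zero_unique by blast
qed

lemma zero_hom: "a \<in> Obj C \<Longrightarrow> b \<in> Obj C \<Longrightarrow> zero_map C a b \<in> hom C a b"
  by (metis zero_fac comp_hom)

lemma zero_left: assumes f: "f \<in> hom C b c" and a: "a \<in> Obj C"
  shows "f \<cdot> zero_map C a b = zero_map C a c"
proof -
  have b: "b \<in> Obj C" using f hom_obj by blast
  obtain z g k where z: "is_zero_obj C z" "g \<in> hom C a z" "k \<in> hom C z b" "zero_map C a b = k \<cdot> g"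
    using zero_fac[OF a b] by blast
  have "f \<cdot> (k \<cdot> g) = (f \<cdot> k) \<cdot> g" using assoc z f by blast
  moreover have "f \<cdot> k \<in> hom C z c" using comp_hom z f by blast
  ultimately show ?thesis using zero_unique z by metis
qed

lemma zero_right: assumes f: "f \<in> hom C a b" and c: "c \<in> Obj C"
  shows "zero_map C b c \<cdot> f = zero_map C a c"
proof -
  have b: "b \<in> Obj C" using f hom_obj by blast
  obtain z g k where z: "is_zero_obj C z" "g \<in> hom C b z" "k \<in> hom C z c" "zero_map C b c = k \<cdot> g"
    using zero_fac[OF b c] by blast
  have "(k \<cdot> g) \<cdot> f = k \<cdot> (g \<cdot> f)" using assoc z f by metis
  moreover have "g \<cdot> f \<in> hom C a z" using comp_hom z f by blast
  ultimately show ?thesis using zero_unique z by metis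
qed

end

context cctx begin

lemma codiag_prop: assumes "W \<in> Obj C" "X \<in> Obj C"
  shows "codiag C W X \<in> hom C (copObj C W X) W \<and> codiag C W X \<cdot> inj1 C W X = Id C W
     \<and> codiag C W X \<cdot> inj2 C W X = zero_map C X W"
  unfolding codiag_def using copair_prop[OF id_hom[OF assms(1)] zero_hom[OF assms(2,1)]] .

lemma pb_eq: "pb C (codiag C W X) (codiag C W Y) = (PB C W X Y, pr1 C W X Y, pr2 C W X Y)"
  by (simp add: PB_def pr1_def pr2_def)

lemma pb_ok: assumes "W \<in> Obj C" "X \<in> Obj C" "Y \<in> Obj C"
  shows "is_pullback C (codiag C W X) (codiag C W Y) (PB C W X Y, pr1 C W X Y, pr2 C W X Y)"
proof -
  have "codiag C W X \<in> Arr C" "codiag C W Y \<in> Arr C" "Cod C (codiag C W X) = Cod C (codiag C W Y)"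
    using codiag_prop assms homD by metis+
  then have "\<exists>r. is_pullback C (codiag C W X) (codiag C W Y) r"
    using fl unfolding has_finite_limits_def by blast
  then show ?thesis using someI_ex pb_eq unfolding pb_def by metis
qed

lemma pb_parts: assumes "W \<in> Obj C" "X \<in> Obj C" "Y \<in> Obj C"
  shows "PB C W X Y \<in> Obj C" "pr1 C W X Y \<in> hom C (PB C W X Y) (copObj C W X)"
    "pr2 C W X Y \<in> hom C (PB C W X Y) (copObj C W Y)"
    "codiag C W X \<cdot> pr1 C W X Y = codiag C W Y \<cdot> pr2 C W X Y"
    "\<And>q u v. u \<in> hom C q (copObj C W X) \<Longrightarrow> v \<in> hom C q (copObj C W Y) \<Longrightarrow>
        codiag C W X \<cdot> u = codiag C W Y \<cdot> v \<Longrightarrow>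
        (\<exists>!t. t \<in> hom C q (PB C W X Y) \<and> pr1 C W X Y \<cdot> t = u \<and> pr2 C W X Y \<cdot> t = v)"
proof -
  have dx: "Dom C (codiag C W X) = copObj C W X" and dy: "Dom C (codiag C W Y) = copObj C W Y"
    using codiag_prop assms homD by metis+
  note p = pb_ok[OF assms, unfolded is_pullback_def, simplified, unfolded dx dy]
  show "PB C W X Y \<in> Obj C" "pr1 C W X Y \<in> hom C (PB C W X Y) (copObj C W X)"
    "pr2 C W X Y \<in> hom C (PB C W X Y) (copObj C W Y)"
    "codiag C W X \<cdot> pr1 C W X Y = codiag C W Y \<cdot> pr2 C W X Y" using p by auto
  show "\<And>q u v. u \<in> hom C q (copObj C W X) \<Longrightarrow> v \<in> hom C q (copObj C W Y) \<Longrightarrow>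
        codiag C W X \<cdot> u = codiag C W Y \<cdot> v \<Longrightarrow>
        (\<exists>!t. t \<in> hom C q (PB C W X Y) \<and> pr1 C W X Y \<cdot> t = u \<and> pr2 C W X Y \<cdot> t = v)"
    using p by blast
qed

lemma pbpair_prop: assumes o: "W \<in> Obj C" "X \<in> Obj C" "Y \<in> Obj C"
  and u: "u \<in> hom C q (copObj C W X)" and v: "v \<in> hom C q (copObj C W Y)"
  and e: "codiag C W X \<cdot> u = codiag C W Y \<cdot> v"
  shows "pbpair C W X Y u v \<in> hom C q (PB C W X Y) \<and> pr1 C W X Y \<cdot> pbpair C W X Y u v = u
     \<and> pr2 C W X Y \<cdot> pbpair C W X Y u v = v"
proof -
  have "pbpair C W X Y u v = (THE t. t \<in> hom C q (PB C W X Y) \<and> pr1 C W X Y \<cdot> t = u \<and> pr2 C W X Y \<cdot> t = v)"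
    using u unfolding pbpair_def hom_def by auto
  then show ?thesis using theI'[OF pb_parts(5)[OF o u v e]] by simp
qed

lemma pb_unique: assumes o: "W \<in> Obj C" "X \<in> Obj C" "Y \<in> Obj C"
  and t: "t \<in> hom C q (PB C W X Y)" "t' \<in> hom C q (PB C W X Y)"
  and e: "pr1 C W X Y \<cdot> t = pr1 C W X Y \<cdot> t'" "pr2 C W X Y \<cdot> t = pr2 C W X Y \<cdot> t'"
  shows "t = t'"
proof -
  have u: "pr1 C W X Y \<cdot> t \<in> hom C q (copObj C W X)" and v: "pr2 C W X Y \<cdot> t \<in> hom C q (copObj C W Y)"
    using comp_hom t pb_parts[OF o] by blast+
  have "codiag C W X \<cdot> (pr1 C W X Y \<cdot> t) = codiag C W Y \<cdot> (pr2 C W X Y \<cdot> t)"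
  proof -
    have "codiag C W X \<cdot> (pr1 C W X Y \<cdot> t) = (codiag C W X \<cdot> pr1 C W X Y) \<cdot> t"
      using assoc[OF t(1) pb_parts(2)[OF o] conjunct1[OF codiag_prop[OF o(1,2)]]] by simp
    also have "\<dots> = (codiag C W Y \<cdot> pr2 C W X Y) \<cdot> t" using pb_parts[OF o] by simp
    also have "\<dots> = codiag C W Y \<cdot> (pr2 C W X Y \<cdot> t)"
      using assoc[OF t(1) pb_parts(3)[OF o] conjunct1[OF codiag_prop[OF o(1,3)]]] by simp
    finally show ?thesis .
  qed
  from pb_parts(5)[OF o u v this] show ?thesis
  proof (rule ex1_eq)
    show "t \<in> hom C q (PB C W X Y) \<and> pr1 C W X Y \<cdot> t = pr1 C W X Y \<cdot> t \<and> pr2 C W X Y \<cdot> t = pr2 C W X Y \<cdot> t"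
      using t by simp
    show "t' \<in> hom C q (PB C W X Y) \<and> pr1 C W X Y \<cdot> t' = pr1 C W X Y \<cdot> t \<and> pr2 C W X Y \<cdot> t' = pr2 C W X Y \<cdot> t"
      using t e by simp
  qed
qed

lemma copmap_prop: assumes h: "h \<in> hom C W W'" and f: "f \<in> hom C X X'"
  shows "copmap C h f \<in> hom C (copObj C W X) (copObj C W' X') \<and>
    copmap C h f \<cdot> inj1 C W X = inj1 C W' X' \<cdot> h \<and> copmap C h f \<cdot> inj2 C W X = inj2 C W' X' \<cdot> f"
proof -
  have o: "W' \<in> Obj C" "X' \<in> Obj C" using h f hom_obj by auto
  have "Cod C h = W'" "Cod C f = X'" using h f homD by auto
  then have cm: "copmap C h f = copair C (inj1 C W' X' \<cdot> h) (inj2 C W' X' \<cdot> f)" by (simp add: copmap_def)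
  have "inj1 C W' X' \<cdot> h \<in> hom C W (copObj C W' X')" "inj2 C W' X' \<cdot> f \<in> hom C X (copObj C W' X')"
    using comp_hom inj1_hom inj2_hom o h f by blast+
  from copair_prop[OF this] show ?thesis unfolding cm .
qed

lemma codiag_copmap: assumes h: "h \<in> hom C W W'" and f: "f \<in> hom C X X'"
  shows "codiag C W' X' \<cdot> copmap C h f = h \<cdot> codiag C W X"
proof -
  have o: "W \<in> Obj C" "X \<in> Obj C" "W' \<in> Obj C" "X' \<in> Obj C" using h f hom_obj by auto
  note cm = copmap_prop[OF h f]
  note cd = codiag_prop[OF o(1,2)] and cd' = codiag_prop[OF o(3,4)]
  have cmh: "copmap C h f \<in> hom C (copObj C W X) (copObj C W' X')" using cm by blast
  have cdh: "codiag C W X \<in> hom C (copObj C W X) W" using cd by blast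
  have cdh': "codiag C W' X' \<in> hom C (copObj C W' X') W'" using cd' by blast
  note i1 = inj1_hom[OF o(1,2)] and i1' = inj1_hom[OF o(3,4)]
  note i2 = inj2_hom[OF o(1,2)] and i2' = inj2_hom[OF o(3,4)]
  show ?thesis
  proof (rule cop_unique[OF o(1,2)])
    show "codiag C W' X' \<cdot> copmap C h f \<in> hom C (copObj C W X) W'" using comp_hom[OF cmh cdh'] .
    show "h \<cdot> codiag C W X \<in> hom C (copObj C W X) W'" using comp_hom[OF cdh h] .
    have "(codiag C W' X' \<cdot> copmap C h f) \<cdot> inj1 C W X = codiag C W' X' \<cdot> (copmap C h f \<cdot> inj1 C W X)"
      using assoc[OF i1 cmh cdh'] by simp
    also have "\<dots> = (codiag C W' X' \<cdot> inj1 C W' X') \<cdot> h" using cm assoc[OF h i1' cdh'] by simp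
    also have "\<dots> = h" using cd' id_left h by simp
    also have "\<dots> = h \<cdot> (codiag C W X \<cdot> inj1 C W X)" using cd id_right h by simp
    also have "\<dots> = (h \<cdot> codiag C W X) \<cdot> inj1 C W X" using assoc[OF i1 cdh h] .
    finally show "(codiag C W' X' \<cdot> copmap C h f) \<cdot> inj1 C W X = (h \<cdot> codiag C W X) \<cdot> inj1 C W X" .
    have "(codiag C W' X' \<cdot> copmap C h f) \<cdot> inj2 C W X = codiag C W' X' \<cdot> (copmap C h f \<cdot> inj2 C W X)"
      using assoc[OF i2 cmh cdh'] by simp
    also have "\<dots> = (codiag C W' X' \<cdot> inj2 C W' X') \<cdot> f" using cm assoc[OF f i2' cdh'] by simp
    also have "\<dots> = zero_map C X W'" using cd' zero_right f o by simp
    also have "\<dots> = h \<cdot> (codiag C W X \<cdot> inj2 C W X)" using cd zero_left h o by simp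
    also have "\<dots> = (h \<cdot> codiag C W X) \<cdot> inj2 C W X" using assoc[OF i2 cdh h] .
    finally show "(codiag C W' X' \<cdot> copmap C h f) \<cdot> inj2 C W X = (h \<cdot> codiag C W X) \<cdot> inj2 C W X" .
  qed
qed

end

context cctx begin

abbreviation e1 where "e1 W X Y \<equiv> pbpair C W X Y (Id C (copObj C W X)) (inj1 C W Y \<cdot> codiag C W X)"
abbreviation e2 where "e2 W X Y \<equiv> pbpair C W X Y (inj1 C W X \<cdot> codiag C W Y) (Id C (copObj C W Y))"

lemma assoc4: "f \<in> hom C a b \<Longrightarrow> g \<in> hom C b c \<Longrightarrow> k \<in> hom C c d \<Longrightarrow> l \<in> hom C d e \<Longrightarrow>
   l \<cdot> ((k \<cdot> g) \<cdot> f) = ((l \<cdot> k) \<cdot> g) \<cdot> f"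
proof -
  assume f: "f \<in> hom C a b" and g: "g \<in> hom C b c" and k: "k \<in> hom C c d" and l: "l \<in> hom C d e"
  have "l \<cdot> ((k \<cdot> g) \<cdot> f) = (l \<cdot> (k \<cdot> g)) \<cdot> f" using assoc[OF f comp_hom[OF g k] l] .
  also have "\<dots> = ((l \<cdot> k) \<cdot> g) \<cdot> f" using assoc[OF g k l] by simp
  finally show ?thesis .
qed

lemma codiag_hom: "W \<in> Obj C \<Longrightarrow> X \<in> Obj C \<Longrightarrow> codiag C W X \<in> hom C (copObj C W X) W"
  using codiag_prop by blast
lemma codiag_i1: "W \<in> Obj C \<Longrightarrow> X \<in> Obj C \<Longrightarrow> codiag C W X \<cdot> inj1 C W X = Id C W"
  using codiag_prop by blast
lemma codiag_i2: "W \<in> Obj C \<Longrightarrow> X \<in> Obj C \<Longrightarrow> codiag C W X \<cdot> inj2 C W X = zero_map C X W"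
  using codiag_prop by blast

lemma e1_prop: assumes o: "W \<in> Obj C" "X \<in> Obj C" "Y \<in> Obj C"
  shows "e1 W X Y \<in> hom C (copObj C W X) (PB C W X Y) \<and> pr1 C W X Y \<cdot> e1 W X Y = Id C (copObj C W X)
    \<and> pr2 C W X Y \<cdot> e1 W X Y = inj1 C W Y \<cdot> codiag C W X"
proof (rule pbpair_prop[OF o])
  note cx = codiag_hom[OF o(1,2)] and cy = codiag_hom[OF o(1,3)]
  note i1y = inj1_hom[OF o(1,3)]
  show "Id C (copObj C W X) \<in> hom C (copObj C W X) (copObj C W X)" using id_hom cop_obj o by blast
  show "inj1 C W Y \<cdot> codiag C W X \<in> hom C (copObj C W X) (copObj C W Y)" using comp_hom[OF cx i1y] .
  have "codiag C W Y \<cdot> (inj1 C W Y \<cdot> codiag C W X) = (codiag C W Y \<cdot> inj1 C W Y) \<cdot> codiag C W X"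
    using assoc[OF cx i1y cy] .
  also have "\<dots> = codiag C W X" using codiag_i1[OF o(1,3)] id_left[OF cx] by simp
  also have "\<dots> = codiag C W X \<cdot> Id C (copObj C W X)" using id_right[OF cx] by simp
  finally show "codiag C W X \<cdot> Id C (copObj C W X) = codiag C W Y \<cdot> (inj1 C W Y \<cdot> codiag C W X)" by simp
qed

lemma e2_prop: assumes o: "W \<in> Obj C" "X \<in> Obj C" "Y \<in> Obj C"
  shows "e2 W X Y \<in> hom C (copObj C W Y) (PB C W X Y) \<and> pr1 C W X Y \<cdot> e2 W X Y = inj1 C W X \<cdot> codiag C W Y
    \<and> pr2 C W X Y \<cdot> e2 W X Y = Id C (copObj C W Y)"
proof (rule pbpair_prop[OF o])
  note cx = codiag_hom[OF o(1,2)] and cy = codiag_hom[OF o(1,3)]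
  note i1x = inj1_hom[OF o(1,2)]
  show "Id C (copObj C W Y) \<in> hom C (copObj C W Y) (copObj C W Y)" using id_hom cop_obj o by blast
  show "inj1 C W X \<cdot> codiag C W Y \<in> hom C (copObj C W Y) (copObj C W X)" using comp_hom[OF cy i1x] .
  have "codiag C W X \<cdot> (inj1 C W X \<cdot> codiag C W Y) = (codiag C W X \<cdot> inj1 C W X) \<cdot> codiag C W Y"
    using assoc[OF cy i1x cx] .
  also have "\<dots> = codiag C W Y" using codiag_i1[OF o(1,2)] id_left[OF cy] by simp
  also have "\<dots> = codiag C W Y \<cdot> Id C (copObj C W Y)" using id_right[OF cy] by simp
  finally show "codiag C W X \<cdot> (inj1 C W X \<cdot> codiag C W Y) = codiag C W Y \<cdot> Id C (copObj C W Y)" .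
qed

lemma e1_char1: assumes o: "W \<in> Obj C" "X \<in> Obj C" "Y \<in> Obj C"
  and h: "h \<in> hom C q W" and t: "t \<in> hom C q (PB C W X Y)"
  and t1: "pr1 C W X Y \<cdot> t = inj1 C W X \<cdot> h" and t2: "pr2 C W X Y \<cdot> t = inj1 C W Y \<cdot> h"
  shows "t = (e1 W X Y \<cdot> inj1 C W X) \<cdot> h"
proof (rule pb_unique[OF o t])
  note e = e1_prop[OF o] and cx = codiag_hom[OF o(1,2)]
  have eh: "e1 W X Y \<in> hom C (copObj C W X) (PB C W X Y)" using e by blast
  note p1 = pb_parts(2)[OF o] and p2 = pb_parts(3)[OF o]
  note i1 = inj1_hom[OF o(1,2)] and i1y = inj1_hom[OF o(1,3)]
  show "(e1 W X Y \<cdot> inj1 C W X) \<cdot> h \<in> hom C q (PB C W X Y)" using comp_hom[OF h comp_hom[OF i1 eh]] .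
  have "pr1 C W X Y \<cdot> ((e1 W X Y \<cdot> inj1 C W X) \<cdot> h) = ((pr1 C W X Y \<cdot> e1 W X Y) \<cdot> inj1 C W X) \<cdot> h"
    using assoc4[OF h i1 eh p1] .
  also have "\<dots> = inj1 C W X \<cdot> h" using e id_left[OF i1] by simp
  finally show "pr1 C W X Y \<cdot> t = pr1 C W X Y \<cdot> ((e1 W X Y \<cdot> inj1 C W X) \<cdot> h)" using t1 by simp
  have "pr2 C W X Y \<cdot> ((e1 W X Y \<cdot> inj1 C W X) \<cdot> h) = ((pr2 C W X Y \<cdot> e1 W X Y) \<cdot> inj1 C W X) \<cdot> h"
    using assoc4[OF h i1 eh p2] .
  also have "\<dots> = (inj1 C W Y \<cdot> (codiag C W X \<cdot> inj1 C W X)) \<cdot> h" using e assoc[OF i1 cx i1y] by simp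
  also have "\<dots> = inj1 C W Y \<cdot> h" using codiag_i1[OF o(1,2)] id_right[OF i1y] by simp
  finally show "pr2 C W X Y \<cdot> t = pr2 C W X Y \<cdot> ((e1 W X Y \<cdot> inj1 C W X) \<cdot> h)" using t2 by simp
qed

lemma e1_char2: assumes o: "W \<in> Obj C" "X \<in> Obj C" "Y \<in> Obj C"
  and h: "h \<in> hom C q X" and t: "t \<in> hom C q (PB C W X Y)"
  and t1: "pr1 C W X Y \<cdot> t = inj2 C W X \<cdot> h" and t2: "pr2 C W X Y \<cdot> t = zero_map C q (copObj C W Y)"
  shows "t = (e1 W X Y \<cdot> inj2 C W X) \<cdot> h"
proof (rule pb_unique[OF o t])
  note e = e1_prop[OF o] and cx = codiag_hom[OF o(1,2)]
  have eh: "e1 W X Y \<in> hom C (copObj C W X) (PB C W X Y)" using e by blast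
  note p1 = pb_parts(2)[OF o] and p2 = pb_parts(3)[OF o]
  note i1 = inj2_hom[OF o(1,2)] and i1y = inj1_hom[OF o(1,3)]
  show "(e1 W X Y \<cdot> inj2 C W X) \<cdot> h \<in> hom C q (PB C W X Y)" using comp_hom[OF h comp_hom[OF i1 eh]] .
  have "pr1 C W X Y \<cdot> ((e1 W X Y \<cdot> inj2 C W X) \<cdot> h) = ((pr1 C W X Y \<cdot> e1 W X Y) \<cdot> inj2 C W X) \<cdot> h"
    using assoc4[OF h i1 eh p1] .
  also have "\<dots> = inj2 C W X \<cdot> h" using e id_left[OF i1] by simp
  finally show "pr1 C W X Y \<cdot> t = pr1 C W X Y \<cdot> ((e1 W X Y \<cdot> inj2 C W X) \<cdot> h)" using t1 by simp
  have "pr2 C W X Y \<cdot> ((e1 W X Y \<cdot> inj2 C W X) \<cdot> h) = ((pr2 C W X Y \<cdot> e1 W X Y) \<cdot> inj2 C W X) \<cdot> h"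
    using assoc4[OF h i1 eh p2] .
  also have "\<dots> = (inj1 C W Y \<cdot> (codiag C W X \<cdot> inj2 C W X)) \<cdot> h" using e assoc[OF i1 cx i1y] by simp
  also have "\<dots> = zero_map C X (copObj C W Y) \<cdot> h" using codiag_i2[OF o(1,2)] zero_left[OF i1y o(2)] by simp
  also have "\<dots> = zero_map C q (copObj C W Y)" using zero_right[OF h cop_obj[OF o(1,3)]] .
  finally show "pr2 C W X Y \<cdot> t = pr2 C W X Y \<cdot> ((e1 W X Y \<cdot> inj2 C W X) \<cdot> h)" using t2 by simp
qed

lemma e2_char1: assumes o: "W \<in> Obj C" "X \<in> Obj C" "Y \<in> Obj C"
  and h: "h \<in> hom C q W" and t: "t \<in> hom C q (PB C W X Y)"
  and t1: "pr1 C W X Y \<cdot> t = inj1 C W X \<cdot> h" and t2: "pr2 C W X Y \<cdot> t = inj1 C W Y \<cdot> h"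
  shows "t = (e2 W X Y \<cdot> inj1 C W Y) \<cdot> h"
proof (rule pb_unique[OF o t])
  note e = e2_prop[OF o] and cx = codiag_hom[OF o(1,3)]
  have eh: "e2 W X Y \<in> hom C (copObj C W Y) (PB C W X Y)" using e by blast
  note p1 = pb_parts(2)[OF o] and p2 = pb_parts(3)[OF o]
  note i1 = inj1_hom[OF o(1,3)] and i1y = inj1_hom[OF o(1,2)]
  show "(e2 W X Y \<cdot> inj1 C W Y) \<cdot> h \<in> hom C q (PB C W X Y)" using comp_hom[OF h comp_hom[OF i1 eh]] .
  have "pr2 C W X Y \<cdot> ((e2 W X Y \<cdot> inj1 C W Y) \<cdot> h) = ((pr2 C W X Y \<cdot> e2 W X Y) \<cdot> inj1 C W Y) \<cdot> h"
    using assoc4[OF h i1 eh p2] .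
  also have "\<dots> = inj1 C W Y \<cdot> h" using e id_left[OF i1] by simp
  finally show "pr2 C W X Y \<cdot> t = pr2 C W X Y \<cdot> ((e2 W X Y \<cdot> inj1 C W Y) \<cdot> h)" using t2 by simp
  have "pr1 C W X Y \<cdot> ((e2 W X Y \<cdot> inj1 C W Y) \<cdot> h) = ((pr1 C W X Y \<cdot> e2 W X Y) \<cdot> inj1 C W Y) \<cdot> h"
    using assoc4[OF h i1 eh p1] .
  also have "\<dots> = (inj1 C W X \<cdot> (codiag C W Y \<cdot> inj1 C W Y)) \<cdot> h" using e assoc[OF i1 cx i1y] by simp
  also have "\<dots> = inj1 C W X \<cdot> h" using codiag_i1[OF o(1,3)] id_right[OF i1y] by simp
  finally show "pr1 C W X Y \<cdot> t = pr1 C W X Y \<cdot> ((e2 W X Y \<cdot> inj1 C W Y) \<cdot> h)" using t1 by simp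
qed

lemma e2_char2: assumes o: "W \<in> Obj C" "X \<in> Obj C" "Y \<in> Obj C"
  and h: "h \<in> hom C q Y" and t: "t \<in> hom C q (PB C W X Y)"
  and t1: "pr1 C W X Y \<cdot> t = zero_map C q (copObj C W X)" and t2: "pr2 C W X Y \<cdot> t = inj2 C W Y \<cdot> h"
  shows "t = (e2 W X Y \<cdot> inj2 C W Y) \<cdot> h"
proof (rule pb_unique[OF o t])
  note e = e2_prop[OF o] and cx = codiag_hom[OF o(1,3)]
  have eh: "e2 W X Y \<in> hom C (copObj C W Y) (PB C W X Y)" using e by blast
  note p1 = pb_parts(2)[OF o] and p2 = pb_parts(3)[OF o]
  note i1 = inj2_hom[OF o(1,3)] and i1y = inj1_hom[OF o(1,2)]
  show "(e2 W X Y \<cdot> inj2 C W Y) \<cdot> h \<in> hom C q (PB C W X Y)" using comp_hom[OF h comp_hom[OF i1 eh]] .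
  have "pr2 C W X Y \<cdot> ((e2 W X Y \<cdot> inj2 C W Y) \<cdot> h) = ((pr2 C W X Y \<cdot> e2 W X Y) \<cdot> inj2 C W Y) \<cdot> h"
    using assoc4[OF h i1 eh p2] .
  also have "\<dots> = inj2 C W Y \<cdot> h" using e id_left[OF i1] by simp
  finally show "pr2 C W X Y \<cdot> t = pr2 C W X Y \<cdot> ((e2 W X Y \<cdot> inj2 C W Y) \<cdot> h)" using t2 by simp
  have "pr1 C W X Y \<cdot> ((e2 W X Y \<cdot> inj2 C W Y) \<cdot> h) = ((pr1 C W X Y \<cdot> e2 W X Y) \<cdot> inj2 C W Y) \<cdot> h"
    using assoc4[OF h i1 eh p1] .
  also have "\<dots> = (inj1 C W X \<cdot> (codiag C W Y \<cdot> inj2 C W Y)) \<cdot> h" using e assoc[OF i1 cx i1y] by simp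
  also have "\<dots> = zero_map C Y (copObj C W X) \<cdot> h" using codiag_i2[OF o(1,3)] zero_left[OF i1y o(3)] by simp
  also have "\<dots> = zero_map C q (copObj C W X)" using zero_right[OF h cop_obj[OF o(1,2)]] .
  finally show "pr1 C W X Y \<cdot> t = pr1 C W X Y \<cdot> ((e2 W X Y \<cdot> inj2 C W Y) \<cdot> h)" using t1 by simp
qed

end

context cctx begin

lemma mult_facts: assumes mc: "mcs C c' m'"
  shows "m' \<in> hom C (PB C (wobj c') (lobj c') (robj c')) (apex c')"
   "\<And>h q t. h \<in> hom C q (wobj c') \<Longrightarrow> t \<in> hom C q (PB C (wobj c') (lobj c') (robj c')) \<Longrightarrow>
     pr1 C (wobj c') (lobj c') (robj c') \<cdot> t = inj1 C (wobj c') (lobj c') \<cdot> h \<Longrightarrow>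
     pr2 C (wobj c') (lobj c') (robj c') \<cdot> t = inj1 C (wobj c') (robj c') \<cdot> h \<Longrightarrow> m' \<cdot> t = wmap c' \<cdot> h"
   "\<And>h q t. h \<in> hom C q (lobj c') \<Longrightarrow> t \<in> hom C q (PB C (wobj c') (lobj c') (robj c')) \<Longrightarrow>
     pr1 C (wobj c') (lobj c') (robj c') \<cdot> t = inj2 C (wobj c') (lobj c') \<cdot> h \<Longrightarrow>
     pr2 C (wobj c') (lobj c') (robj c') \<cdot> t = zero_map C q (copObj C (wobj c') (robj c')) \<Longrightarrow> m' \<cdot> t = lmap c' \<cdot> h"
   "\<And>h q t. h \<in> hom C q (robj c') \<Longrightarrow> t \<in> hom C q (PB C (wobj c') (lobj c') (robj c')) \<Longrightarrow>
     pr1 C (wobj c') (lobj c') (robj c') \<cdot> t = zero_map C q (copObj C (wobj c') (lobj c')) \<Longrightarrow>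
     pr2 C (wobj c') (lobj c') (robj c') \<cdot> t = inj2 C (wobj c') (robj c') \<cdot> h \<Longrightarrow> m' \<cdot> t = rmap c' \<cdot> h"
proof -
  let ?W = "wobj c'" and ?X = "lobj c'" and ?Y = "robj c'"
  have wc: "wcospan C c'" and im: "internal_mult C c' m'" using mc unfolding mcs_def by auto
  have w: "wmap c' \<in> hom C ?W (apex c')" and x: "lmap c' \<in> hom C ?X (apex c')" and y: "rmap c' \<in> hom C ?Y (apex c')"
    using wc unfolding wcospan_def by auto
  have o: "?W \<in> Obj C" "?X \<in> Obj C" "?Y \<in> Obj C" using w x y hom_obj by auto
  have m: "m' \<in> hom C (PB C ?W ?X ?Y) (apex c')" and m1: "m' \<cdot> e1 ?W ?X ?Y = copair C (wmap c') (lmap c')"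
    and m2: "m' \<cdot> e2 ?W ?X ?Y = copair C (wmap c') (rmap c')"
    using im unfolding internal_mult_def Let_def by auto
  note cpx = copair_prop[OF w x] and cpy = copair_prop[OF w y]
  note e1p = e1_prop[OF o] and e2p = e2_prop[OF o]
  have e1h: "e1 ?W ?X ?Y \<in> hom C (copObj C ?W ?X) (PB C ?W ?X ?Y)" using e1p by blast
  have e2h: "e2 ?W ?X ?Y \<in> hom C (copObj C ?W ?Y) (PB C ?W ?X ?Y)" using e2p by blast
  show "m' \<in> hom C (PB C ?W ?X ?Y) (apex c')" by (fact m)
  show "m' \<cdot> t = wmap c' \<cdot> h" if h: "h \<in> hom C q ?W" and t: "t \<in> hom C q (PB C ?W ?X ?Y)"
    and q1: "pr1 C ?W ?X ?Y \<cdot> t = inj1 C ?W ?X \<cdot> h" and q2: "pr2 C ?W ?X ?Y \<cdot> t = inj1 C ?W ?Y \<cdot> h" for h q t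
  proof -
    have "t = (e1 ?W ?X ?Y \<cdot> inj1 C ?W ?X) \<cdot> h" using e1_char1[OF o h t q1 q2] .
    then have "m' \<cdot> t = ((m' \<cdot> e1 ?W ?X ?Y) \<cdot> inj1 C ?W ?X) \<cdot> h"
      using assoc4[OF h inj1_hom[OF o(1,2)] e1h m] by simp
    then show ?thesis using m1 cpx by simp
  qed
  show "m' \<cdot> t = lmap c' \<cdot> h" if h: "h \<in> hom C q ?X" and t: "t \<in> hom C q (PB C ?W ?X ?Y)"
    and q1: "pr1 C ?W ?X ?Y \<cdot> t = inj2 C ?W ?X \<cdot> h" and q2: "pr2 C ?W ?X ?Y \<cdot> t = zero_map C q (copObj C ?W ?Y)" for h q t
  proof -
    have "t = (e1 ?W ?X ?Y \<cdot> inj2 C ?W ?X) \<cdot> h" using e1_char2[OF o h t q1 q2] .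
    then have "m' \<cdot> t = ((m' \<cdot> e1 ?W ?X ?Y) \<cdot> inj2 C ?W ?X) \<cdot> h"
      using assoc4[OF h inj2_hom[OF o(1,2)] e1h m] by simp
    then show ?thesis using m1 cpx by simp
  qed
  show "m' \<cdot> t = rmap c' \<cdot> h" if h: "h \<in> hom C q ?Y" and t: "t \<in> hom C q (PB C ?W ?X ?Y)"
    and q1: "pr1 C ?W ?X ?Y \<cdot> t = zero_map C q (copObj C ?W ?X)" and q2: "pr2 C ?W ?X ?Y \<cdot> t = inj2 C ?W ?Y \<cdot> h" for h q t
  proof -
    have "t = (e2 ?W ?X ?Y \<cdot> inj2 C ?W ?Y) \<cdot> h" using e2_char2[OF o h t q1 q2] .
    then have "m' \<cdot> t = ((m' \<cdot> e2 ?W ?X ?Y) \<cdot> inj2 C ?W ?Y) \<cdot> h"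
      using assoc4[OF h inj2_hom[OF o(1,3)] e2h m] by simp
    then show ?thesis using m2 cpy by simp
  qed
qed

end

context cctx begin

lemma main:
  assumes wc: "wcospan C c"
    and cp: "is_coproduct3 C (wobj c) (lobj c) (robj c) (T, j1, j2, j3)"
    and s: "s \<in> hom C T (apex c)"
    and s1: "s \<cdot> j1 = wmap c" and s2: "s \<cdot> j2 = lmap c" and s3: "s \<cdot> j3 = rmap c"
    and v: "v \<in> hom C T (PB C (wobj c) (lobj c) (robj c))"
    and v11: "pr1 C (wobj c) (lobj c) (robj c) \<cdot> (v \<cdot> j1) = inj1 C (wobj c) (lobj c)"
    and v12: "pr1 C (wobj c) (lobj c) (robj c) \<cdot> (v \<cdot> j2) = inj2 C (wobj c) (lobj c)"
    and v13: "pr1 C (wobj c) (lobj c) (robj c) \<cdot> (v \<cdot> j3) = zero_map C (robj c) (copObj C (wobj c) (lobj c))"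
    and v21: "pr2 C (wobj c) (lobj c) (robj c) \<cdot> (v \<cdot> j1) = inj1 C (wobj c) (robj c)"
    and v22: "pr2 C (wobj c) (lobj c) (robj c) \<cdot> (v \<cdot> j2) = zero_map C (lobj c) (copObj C (wobj c) (robj c))"
    and v23: "pr2 C (wobj c) (lobj c) (robj c) \<cdot> (v \<cdot> j3) = inj2 C (wobj c) (robj c)"
    and po: "is_pushout C s v (Ct, \<nu>, \<mu>)"
  shows "let ct = \<lparr>apex = Ct, lobj = lobj c, lmap = Comp C \<nu> (lmap c),
                   robj = robj c, rmap = Comp C \<nu> (rmap c),
                   wobj = wobj c, wmap = Comp C \<nu> (wmap c)\<rparr>;
             \<eta> = \<lparr>ma = \<nu>, mf = Id C (lobj c), mg = Id C (robj c), mh = Id C (wobj c)\<rparr>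
         in mcs C ct \<mu> \<and> cs_mor C c ct \<eta> \<and>
            (\<forall>c' m' \<phi>. mcs C c' m' \<longrightarrow> cs_mor C c c' \<phi> \<longrightarrow>
               (\<exists>!\<psi>. mcs_mor C ct \<mu> c' m' \<psi> \<and> cs_comp C \<psi> \<eta> = \<phi>))"
proof -
  let ?W = "wobj c" and ?X = "lobj c" and ?Y = "robj c" and ?A = "apex c"
  let ?P = "PB C ?W ?X ?Y" and ?p1 = "pr1 C ?W ?X ?Y" and ?p2 = "pr2 C ?W ?X ?Y"
  have Ao: "?A \<in> Obj C" and w: "wmap c \<in> hom C ?W ?A" and x: "lmap c \<in> hom C ?X ?A" and y: "rmap c \<in> hom C ?Y ?A"
    using wc unfolding wcospan_def by simp_all
  have o: "?W \<in> Obj C" "?X \<in> Obj C" "?Y \<in> Obj C" using hom_obj[OF w] hom_obj[OF x] hom_obj[OF y] by simp_all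
  have cp': "T \<in> Obj C \<and> j1 \<in> hom C ?W T \<and> j2 \<in> hom C ?X T \<and> j3 \<in> hom C ?Y T \<and>
     (\<forall>c f g k. f \<in> hom C ?W c \<longrightarrow> g \<in> hom C ?X c \<longrightarrow> k \<in> hom C ?Y c \<longrightarrow>
        (\<exists>!u. u \<in> hom C T c \<and> u \<cdot> j1 = f \<and> u \<cdot> j2 = g \<and> u \<cdot> j3 = k))"
    using cp unfolding is_coproduct3_def prod.case .
  have j: "j1 \<in> hom C ?W T" "j2 \<in> hom C ?X T" "j3 \<in> hom C ?Y T" using cp' by simp_all
  have cpall: "\<forall>c f g k. f \<in> hom C ?W c \<longrightarrow> g \<in> hom C ?X c \<longrightarrow> k \<in> hom C ?Y c \<longrightarrow>
        (\<exists>!u. u \<in> hom C T c \<and> u \<cdot> j1 = f \<and> u \<cdot> j2 = g \<and> u \<cdot> j3 = k)"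
    using cp' by (elim conjE)
  have cpu: "u = u'" if uh: "u \<in> hom C T D" and uh': "u' \<in> hom C T D" and e1: "u \<cdot> j1 = u' \<cdot> j1"
    and e2: "u \<cdot> j2 = u' \<cdot> j2" and e3: "u \<cdot> j3 = u' \<cdot> j3" for u u' D
  proof -
    have ex: "\<exists>!t. t \<in> hom C T D \<and> t \<cdot> j1 = u \<cdot> j1 \<and> t \<cdot> j2 = u \<cdot> j2 \<and> t \<cdot> j3 = u \<cdot> j3"
      using cpall[rule_format, OF comp_hom[OF j(1) uh] comp_hom[OF j(2) uh] comp_hom[OF j(3) uh]] .
    show ?thesis by (rule ex1_eq[OF ex]) (use uh uh' e1 e2 e3 in simp_all)
  qed
  have Cs: "Cod C s = ?A" "Cod C v = ?P" using homD[OF s] homD[OF v] by simp_all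
  have po': "Ct \<in> Obj C \<and> \<nu> \<in> hom C ?A Ct \<and> \<mu> \<in> hom C ?P Ct \<and> \<nu> \<cdot> s = \<mu> \<cdot> v \<and>
     (\<forall>q u u'. u \<in> hom C ?A q \<longrightarrow> u' \<in> hom C ?P q \<longrightarrow> u \<cdot> s = u' \<cdot> v \<longrightarrow>
        (\<exists>!t. t \<in> hom C Ct q \<and> t \<cdot> \<nu> = u \<and> t \<cdot> \<mu> = u'))"
    using po unfolding is_pushout_def prod.case Cs by (elim conjE) (intro conjI)
  have nu: "\<nu> \<in> hom C ?A Ct" and mu: "\<mu> \<in> hom C ?P Ct" and sq: "\<nu> \<cdot> s = \<mu> \<cdot> v" and Cto: "Ct \<in> Obj C"
    using po' by simp_all
  have poall: "\<forall>q u u'. u \<in> hom C ?A q \<longrightarrow> u' \<in> hom C ?P q \<longrightarrow> u \<cdot> s = u' \<cdot> v \<longrightarrow>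
        (\<exists>!t. t \<in> hom C Ct q \<and> t \<cdot> \<nu> = u \<and> t \<cdot> \<mu> = u')" using po' by (elim conjE)
  have pou: "\<exists>!t. t \<in> hom C Ct q \<and> t \<cdot> \<nu> = u \<and> t \<cdot> \<mu> = u'"
    if "u \<in> hom C ?A q" "u' \<in> hom C ?P q" "u \<cdot> s = u' \<cdot> v" for q u u'
    using poall[rule_format, OF that] .
  note p1h = pb_parts(2)[OF o] and p2h = pb_parts(3)[OF o] and pe = pb_parts(4)[OF o]
  note i1x = inj1_hom[OF o(1,2)] and i2x = inj2_hom[OF o(1,2)] and i1y = inj1_hom[OF o(1,3)] and i2y = inj2_hom[OF o(1,3)]
  have e1h: "e1 ?W ?X ?Y \<in> hom C (copObj C ?W ?X) ?P" using e1_prop[OF o] by (elim conjE)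
  have e2h: "e2 ?W ?X ?Y \<in> hom C (copObj C ?W ?Y) ?P" using e2_prop[OF o] by (elim conjE)
  have vj: "v \<cdot> j1 \<in> hom C ?W ?P" "v \<cdot> j2 \<in> hom C ?X ?P" "v \<cdot> j3 \<in> hom C ?Y ?P"
    using comp_hom[OF j(1) v] comp_hom[OF j(2) v] comp_hom[OF j(3) v] by simp_all
  have idW: "Id C ?W \<in> hom C ?W ?W" and idX: "Id C ?X \<in> hom C ?X ?X" and idY: "Id C ?Y \<in> hom C ?Y ?Y"
    using id_hom[OF o(1)] id_hom[OF o(2)] id_hom[OF o(3)] by simp_all
  have ve1: "v \<cdot> j1 = e1 ?W ?X ?Y \<cdot> inj1 C ?W ?X"
  proof -
    have "v \<cdot> j1 = (e1 ?W ?X ?Y \<cdot> inj1 C ?W ?X) \<cdot> Id C ?W"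
      by (rule e1_char1[OF o idW vj(1)]) (simp_all add: v11 v21 id_right[OF i1x] id_right[OF i1y])
    then show ?thesis using id_right[OF comp_hom[OF i1x e1h]] by simp
  qed
  have ve2: "v \<cdot> j1 = e2 ?W ?X ?Y \<cdot> inj1 C ?W ?Y"
  proof -
    have "v \<cdot> j1 = (e2 ?W ?X ?Y \<cdot> inj1 C ?W ?Y) \<cdot> Id C ?W"
      by (rule e2_char1[OF o idW vj(1)]) (simp_all add: v11 v21 id_right[OF i1x] id_right[OF i1y])
    then show ?thesis using id_right[OF comp_hom[OF i1y e2h]] by simp
  qed
  have ve3: "v \<cdot> j2 = e1 ?W ?X ?Y \<cdot> inj2 C ?W ?X"
  proof -
    have "v \<cdot> j2 = (e1 ?W ?X ?Y \<cdot> inj2 C ?W ?X) \<cdot> Id C ?X"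
      by (rule e1_char2[OF o idX vj(2)]) (simp_all add: v12 v22 id_right[OF i2x])
    then show ?thesis using id_right[OF comp_hom[OF i2x e1h]] by simp
  qed
  have ve4: "v \<cdot> j3 = e2 ?W ?X ?Y \<cdot> inj2 C ?W ?Y"
  proof -
    have "v \<cdot> j3 = (e2 ?W ?X ?Y \<cdot> inj2 C ?W ?Y) \<cdot> Id C ?Y"
      by (rule e2_char2[OF o idY vj(3)]) (simp_all add: v13 v23 id_right[OF i2y])
    then show ?thesis using id_right[OF comp_hom[OF i2y e2h]] by simp
  qed
  have mvj: "\<mu> \<cdot> (v \<cdot> jj) = \<nu> \<cdot> (s \<cdot> jj)" if "jj \<in> hom C q T" for jj q
    using assoc[OF that v mu] assoc[OF that s nu] sq by simp
  define ct where "ct = \<lparr>apex = Ct, lobj = lobj c, lmap = Comp C \<nu> (lmap c),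
                   robj = robj c, rmap = Comp C \<nu> (rmap c),
                   wobj = wobj c, wmap = Comp C \<nu> (wmap c)\<rparr>"
  define eta where "eta = \<lparr>ma = \<nu>, mf = Id C (lobj c), mg = Id C (robj c), mh = Id C (wobj c)\<rparr>"
  have nw: "\<nu> \<cdot> wmap c \<in> hom C ?W Ct" and nx: "\<nu> \<cdot> lmap c \<in> hom C ?X Ct" and ny: "\<nu> \<cdot> rmap c \<in> hom C ?Y Ct"
    using comp_hom[OF w nu] comp_hom[OF x nu] comp_hom[OF y nu] by simp_all
  have wct: "wcospan C ct" unfolding ct_def wcospan_def using Cto nw nx ny by simp
  have M1: "\<mu> \<cdot> e1 ?W ?X ?Y = copair C (\<nu> \<cdot> wmap c) (\<nu> \<cdot> lmap c)"
  proof (rule cop_unique[OF o(1,2)])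
    note cp1 = copair_prop[OF nw nx]
    show "\<mu> \<cdot> e1 ?W ?X ?Y \<in> hom C (copObj C ?W ?X) Ct" using comp_hom[OF e1h mu] .
    show "copair C (\<nu> \<cdot> wmap c) (\<nu> \<cdot> lmap c) \<in> hom C (copObj C ?W ?X) Ct" using cp1 by (elim conjE)
    have "(\<mu> \<cdot> e1 ?W ?X ?Y) \<cdot> inj1 C ?W ?X = \<mu> \<cdot> (v \<cdot> j1)" using ve1 assoc[OF i1x e1h mu] by simp
    also have "\<dots> = \<nu> \<cdot> wmap c" using mvj[OF j(1)] s1 by simp
    finally show "(\<mu> \<cdot> e1 ?W ?X ?Y) \<cdot> inj1 C ?W ?X = copair C (\<nu> \<cdot> wmap c) (\<nu> \<cdot> lmap c) \<cdot> inj1 C ?W ?X" using cp1 by simp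
    have "(\<mu> \<cdot> e1 ?W ?X ?Y) \<cdot> inj2 C ?W ?X = \<mu> \<cdot> (v \<cdot> j2)" using ve3 assoc[OF i2x e1h mu] by simp
    also have "\<dots> = \<nu> \<cdot> lmap c" using mvj[OF j(2)] s2 by simp
    finally show "(\<mu> \<cdot> e1 ?W ?X ?Y) \<cdot> inj2 C ?W ?X = copair C (\<nu> \<cdot> wmap c) (\<nu> \<cdot> lmap c) \<cdot> inj2 C ?W ?X" using cp1 by simp
  qed
  have M2: "\<mu> \<cdot> e2 ?W ?X ?Y = copair C (\<nu> \<cdot> wmap c) (\<nu> \<cdot> rmap c)"
  proof (rule cop_unique[OF o(1,3)])
    note cp1 = copair_prop[OF nw ny]
    show "\<mu> \<cdot> e2 ?W ?X ?Y \<in> hom C (copObj C ?W ?Y) Ct" using comp_hom[OF e2h mu] .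
    show "copair C (\<nu> \<cdot> wmap c) (\<nu> \<cdot> rmap c) \<in> hom C (copObj C ?W ?Y) Ct" using cp1 by (elim conjE)
    have "(\<mu> \<cdot> e2 ?W ?X ?Y) \<cdot> inj1 C ?W ?Y = \<mu> \<cdot> (v \<cdot> j1)" using ve2 assoc[OF i1y e2h mu] by simp
    also have "\<dots> = \<nu> \<cdot> wmap c" using mvj[OF j(1)] s1 by simp
    finally show "(\<mu> \<cdot> e2 ?W ?X ?Y) \<cdot> inj1 C ?W ?Y = copair C (\<nu> \<cdot> wmap c) (\<nu> \<cdot> rmap c) \<cdot> inj1 C ?W ?Y" using cp1 by simp
    have "(\<mu> \<cdot> e2 ?W ?X ?Y) \<cdot> inj2 C ?W ?Y = \<mu> \<cdot> (v \<cdot> j3)" using ve4 assoc[OF i2y e2h mu] by simp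
    also have "\<dots> = \<nu> \<cdot> rmap c" using mvj[OF j(3)] s3 by simp
    finally show "(\<mu> \<cdot> e2 ?W ?X ?Y) \<cdot> inj2 C ?W ?Y = copair C (\<nu> \<cdot> wmap c) (\<nu> \<cdot> rmap c) \<cdot> inj2 C ?W ?Y" using cp1 by simp
  qed
  have mct: "mcs C ct \<mu>" unfolding mcs_def internal_mult_def Let_def
    using wct mu M1 M2 by (simp add: ct_def)
  have csm: "cs_mor C c ct eta" unfolding cs_mor_def
    using wc wct nu idW idX idY id_right[OF nw] id_right[OF nx] id_right[OF ny]
    by (simp add: ct_def eta_def)
  have univ: "\<exists>!\<psi>. mcs_mor C ct \<mu> c' m' \<psi> \<and> cs_comp C \<psi> eta = \<phi>"
    if mc: "mcs C c' m'" and cm: "cs_mor C c c' \<phi>" for c' m' \<phi>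
  proof -
    let ?W' = "wobj c'" and ?X' = "lobj c'" and ?Y' = "robj c'" and ?A' = "apex c'"
    let ?P' = "PB C ?W' ?X' ?Y'" and ?p1' = "pr1 C ?W' ?X' ?Y'" and ?p2' = "pr2 C ?W' ?X' ?Y'"
    let ?a = "ma \<phi>" and ?f = "mf \<phi>" and ?g = "mg \<phi>" and ?h = "mh \<phi>"
    have wc': "wcospan C c'" using mc unfolding mcs_def by (elim conjE)
    have a: "?a \<in> hom C ?A ?A'" and f: "?f \<in> hom C ?X ?X'" and g: "?g \<in> hom C ?Y ?Y'" and h: "?h \<in> hom C ?W ?W'"
      and cx: "lmap c' \<cdot> ?f = ?a \<cdot> lmap c" and cy: "rmap c' \<cdot> ?g = ?a \<cdot> rmap c"
      and cw: "wmap c' \<cdot> ?h = ?a \<cdot> wmap c"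
      using cm unfolding cs_mor_def by simp_all
    have o': "?W' \<in> Obj C" "?X' \<in> Obj C" "?Y' \<in> Obj C" using hom_obj[OF h] hom_obj[OF f] hom_obj[OF g] by simp_all
    note mf = mult_facts[OF mc]
    note p1h' = pb_parts(2)[OF o'] and p2h' = pb_parts(3)[OF o']
    note hf = copmap_prop[OF h f] and hg = copmap_prop[OF h g]
    have hfh: "copmap C ?h ?f \<in> hom C (copObj C ?W ?X) (copObj C ?W' ?X')" using hf by (elim conjE)
    have hgh: "copmap C ?h ?g \<in> hom C (copObj C ?W ?Y) (copObj C ?W' ?Y')" using hg by (elim conjE)
    let ?u1 = "copmap C ?h ?f \<cdot> ?p1" and ?u2 = "copmap C ?h ?g \<cdot> ?p2"
    have u1: "?u1 \<in> hom C ?P (copObj C ?W' ?X')" and u2: "?u2 \<in> hom C ?P (copObj C ?W' ?Y')"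
      using comp_hom[OF p1h hfh] comp_hom[OF p2h hgh] by simp_all
    have ue: "codiag C ?W' ?X' \<cdot> ?u1 = codiag C ?W' ?Y' \<cdot> ?u2"
    proof -
      note cdx = codiag_hom[OF o(1,2)] and cdy = codiag_hom[OF o(1,3)]
      note cdx' = codiag_hom[OF o'(1,2)] and cdy' = codiag_hom[OF o'(1,3)]
      have "codiag C ?W' ?X' \<cdot> ?u1 = (codiag C ?W' ?X' \<cdot> copmap C ?h ?f) \<cdot> ?p1"
        using assoc[OF p1h hfh cdx'] .
      also have "\<dots> = (?h \<cdot> codiag C ?W ?X) \<cdot> ?p1" using codiag_copmap[OF h f] by simp
      also have "\<dots> = ?h \<cdot> (codiag C ?W ?X \<cdot> ?p1)" using assoc[OF p1h cdx h] by simp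
      also have "\<dots> = ?h \<cdot> (codiag C ?W ?Y \<cdot> ?p2)" using pe by simp
      also have "\<dots> = (?h \<cdot> codiag C ?W ?Y) \<cdot> ?p2" using assoc[OF p2h cdy h] .
      also have "\<dots> = (codiag C ?W' ?Y' \<cdot> copmap C ?h ?g) \<cdot> ?p2" using codiag_copmap[OF h g] by simp
      also have "\<dots> = codiag C ?W' ?Y' \<cdot> ?u2" using assoc[OF p2h hgh cdy'] by simp
      finally show ?thesis .
    qed
    let ?Q = "pbmap C c c' \<phi>"
    have Qd: "?Q = pbpair C ?W' ?X' ?Y' ?u1 ?u2" by (simp add: pbmap_def)
    have QQ: "?Q \<in> hom C ?P ?P' \<and> ?p1' \<cdot> ?Q = ?u1 \<and> ?p2' \<cdot> ?Q = ?u2"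
      using pbpair_prop[OF o' u1 u2 ue] unfolding Qd .
    have Q: "?Q \<in> hom C ?P ?P'" and Q1: "?p1' \<cdot> ?Q = ?u1" and Q2: "?p2' \<cdot> ?Q = ?u2"
      using QQ by simp_all
    have Qr1: "?p1' \<cdot> (?Q \<cdot> r) = copmap C ?h ?f \<cdot> (?p1 \<cdot> r)" if r: "r \<in> hom C q ?P" for r q
    proof -
      have "?p1' \<cdot> (?Q \<cdot> r) = (?p1' \<cdot> ?Q) \<cdot> r" using assoc[OF r Q p1h'] .
      also have "\<dots> = copmap C ?h ?f \<cdot> (?p1 \<cdot> r)" using Q1 assoc[OF r p1h hfh] by simp
      finally show ?thesis .
    qed
    have Qr2: "?p2' \<cdot> (?Q \<cdot> r) = copmap C ?h ?g \<cdot> (?p2 \<cdot> r)" if r: "r \<in> hom C q ?P" for r q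
    proof -
      have "?p2' \<cdot> (?Q \<cdot> r) = (?p2' \<cdot> ?Q) \<cdot> r" using assoc[OF r Q p2h'] .
      also have "\<dots> = copmap C ?h ?g \<cdot> (?p2 \<cdot> r)" using Q2 assoc[OF r p2h hgh] by simp
      finally show ?thesis .
    qed
    have m': "m' \<in> hom C ?P' ?A'" by (fact mf(1))
    have mq: "(m' \<cdot> (?Q \<cdot> v)) \<cdot> jj = m' \<cdot> (?Q \<cdot> (v \<cdot> jj))" if "jj \<in> hom C q T" for jj q
      using assoc[OF that v Q] assoc[OF that comp_hom[OF v Q] m'] by simp
    have QvH: "?Q \<cdot> (v \<cdot> jj) \<in> hom C q ?P'" if "jj \<in> hom C q T" for jj q
      using comp_hom[OF comp_hom[OF that v] Q] .
    have compat: "?a \<cdot> s = m' \<cdot> (?Q \<cdot> v)"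
    proof (rule cpu)
      show "?a \<cdot> s \<in> hom C T ?A'" using comp_hom[OF s a] .
      show "m' \<cdot> (?Q \<cdot> v) \<in> hom C T ?A'" using comp_hom[OF comp_hom[OF v Q] m'] .
      have "(?a \<cdot> s) \<cdot> j1 = wmap c' \<cdot> ?h" using assoc[OF j(1) s a] s1 cw by simp
      moreover have "m' \<cdot> (?Q \<cdot> (v \<cdot> j1)) = wmap c' \<cdot> ?h"
      proof (rule mf(2)[OF h QvH[OF j(1)]])
        show "?p1' \<cdot> (?Q \<cdot> (v \<cdot> j1)) = inj1 C ?W' ?X' \<cdot> ?h" using Qr1[OF vj(1)] v11 hf by simp
        show "?p2' \<cdot> (?Q \<cdot> (v \<cdot> j1)) = inj1 C ?W' ?Y' \<cdot> ?h" using Qr2[OF vj(1)] v21 hg by simp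
      qed
      ultimately show "(?a \<cdot> s) \<cdot> j1 = (m' \<cdot> (?Q \<cdot> v)) \<cdot> j1" using mq[OF j(1)] by simp
      have "(?a \<cdot> s) \<cdot> j2 = lmap c' \<cdot> ?f" using assoc[OF j(2) s a] s2 cx by simp
      moreover have "m' \<cdot> (?Q \<cdot> (v \<cdot> j2)) = lmap c' \<cdot> ?f"
      proof (rule mf(3)[OF f QvH[OF j(2)]])
        show "?p1' \<cdot> (?Q \<cdot> (v \<cdot> j2)) = inj2 C ?W' ?X' \<cdot> ?f" using Qr1[OF vj(2)] v12 hf by simp
        show "?p2' \<cdot> (?Q \<cdot> (v \<cdot> j2)) = zero_map C ?X (copObj C ?W' ?Y')"
          using Qr2[OF vj(2)] v22 zero_left[OF hgh o(2)] by simp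
      qed
      ultimately show "(?a \<cdot> s) \<cdot> j2 = (m' \<cdot> (?Q \<cdot> v)) \<cdot> j2" using mq[OF j(2)] by simp
      have "(?a \<cdot> s) \<cdot> j3 = rmap c' \<cdot> ?g" using assoc[OF j(3) s a] s3 cy by simp
      moreover have "m' \<cdot> (?Q \<cdot> (v \<cdot> j3)) = rmap c' \<cdot> ?g"
      proof (rule mf(4)[OF g QvH[OF j(3)]])
        show "?p1' \<cdot> (?Q \<cdot> (v \<cdot> j3)) = zero_map C ?Y (copObj C ?W' ?X')"
          using Qr1[OF vj(3)] v13 zero_left[OF hfh o(3)] by simp
        show "?p2' \<cdot> (?Q \<cdot> (v \<cdot> j3)) = inj2 C ?W' ?Y' \<cdot> ?g" using Qr2[OF vj(3)] v23 hg by simp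
      qed
      ultimately show "(?a \<cdot> s) \<cdot> j3 = (m' \<cdot> (?Q \<cdot> v)) \<cdot> j3" using mq[OF j(3)] by simp
    qed
    have mQ: "m' \<cdot> ?Q \<in> hom C ?P ?A'" using comp_hom[OF Q m'] .
    have compat2: "?a \<cdot> s = (m' \<cdot> ?Q) \<cdot> v" using compat assoc[OF v Q m'] by simp
    have exT: "\<exists>!t. t \<in> hom C Ct ?A' \<and> t \<cdot> \<nu> = ?a \<and> t \<cdot> \<mu> = m' \<cdot> ?Q" using pou[OF a mQ compat2] .
    then obtain t where tt: "t \<in> hom C Ct ?A' \<and> t \<cdot> \<nu> = ?a \<and> t \<cdot> \<mu> = m' \<cdot> ?Q" by (elim ex1E)
    have t: "t \<in> hom C Ct ?A'" "t \<cdot> \<nu> = ?a" "t \<cdot> \<mu> = m' \<cdot> ?Q" using tt by simp_all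
    have tu: "t' = t" if "t' \<in> hom C Ct ?A'" "t' \<cdot> \<nu> = ?a" "t' \<cdot> \<mu> = m' \<cdot> ?Q" for t'
      by (rule ex1_eq[OF exT]) (use that tt in simp_all)
    define \<psi> where "\<psi> = \<lparr>ma = t, mf = ?f, mg = ?g, mh = ?h\<rparr>"
    have pbm: "pbmap C ct c' \<psi>' = ?Q" if "mf \<psi>' = ?f" "mg \<psi>' = ?g" "mh \<psi>' = ?h" for \<psi>'
      using that by (simp add: pbmap_def ct_def)
    show ?thesis
    proof (rule ex1I[of _ \<psi>])
      have "t \<cdot> (\<nu> \<cdot> lmap c) = ?a \<cdot> lmap c" using assoc[OF x nu t(1)] t by simp
      moreover have "t \<cdot> (\<nu> \<cdot> rmap c) = ?a \<cdot> rmap c" using assoc[OF y nu t(1)] t by simp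
      moreover have "t \<cdot> (\<nu> \<cdot> wmap c) = ?a \<cdot> wmap c" using assoc[OF w nu t(1)] t by simp
      ultimately have "cs_mor C ct c' \<psi>" unfolding cs_mor_def using wct wc' t f g h cx cy cw
        by (simp add: ct_def \<psi>_def)
      moreover have "t \<cdot> \<mu> = m' \<cdot> pbmap C ct c' \<psi>" using pbm[of \<psi>] t by (simp add: \<psi>_def)
      ultimately have "mcs_mor C ct \<mu> c' m' \<psi>" unfolding mcs_mor_def using mct mc by (simp add: \<psi>_def)
      moreover have "cs_comp C \<psi> eta = \<phi>"
        using t id_right[OF f] id_right[OF g] id_right[OF h]
        by (cases \<phi>) (simp add: cs_comp_def \<psi>_def eta_def)
      ultimately show "mcs_mor C ct \<mu> c' m' \<psi> \<and> cs_comp C \<psi> eta = \<phi>" by (rule conjI)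
    next
      fix \<psi>' assume H: "mcs_mor C ct \<mu> c' m' \<psi>' \<and> cs_comp C \<psi>' eta = \<phi>"
      have cm': "cs_mor C ct c' \<psi>'" and mm: "ma \<psi>' \<cdot> \<mu> = m' \<cdot> pbmap C ct c' \<psi>'"
        using H unfolding mcs_mor_def by simp_all
      have cc: "cs_comp C \<psi>' eta = \<phi>" using H by (elim conjE)
      have ha: "ma \<psi>' \<in> hom C Ct ?A'" and hf': "mf \<psi>' \<in> hom C ?X ?X'" and hg': "mg \<psi>' \<in> hom C ?Y ?Y'"
        and hh': "mh \<psi>' \<in> hom C ?W ?W'"
        using cm' unfolding cs_mor_def by (simp_all add: ct_def)
      have ea: "ma \<psi>' \<cdot> \<nu> = ?a" and ef: "mf \<psi>' \<cdot> Id C ?X = ?f" and eg: "mg \<psi>' \<cdot> Id C ?Y = ?g"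
        and eh: "mh \<psi>' \<cdot> Id C ?W = ?h"
        using cc by (auto simp: cs_comp_def eta_def)
      have ef': "mf \<psi>' = ?f" using ef id_right[OF hf'] by simp
      have eg': "mg \<psi>' = ?g" using eg id_right[OF hg'] by simp
      have eh': "mh \<psi>' = ?h" using eh id_right[OF hh'] by simp
      have "ma \<psi>' = t" using tu[OF ha ea] mm pbm[OF ef' eg' eh'] by simp
      then show "\<psi>' = \<psi>" using ef' eg' eh' by (cases \<psi>') (simp add: \<psi>_def)
    qed
  qed
  show ?thesis unfolding Let_def ct_def[symmetric] eta_def[symmetric]
    using mct csm univ by blast
qed

end

theorem theorem3p1:
  fixes C :: "('o,'m) cat" and c :: "('o,'m) wcs"
    and T :: 'o and j1 j2 j3 s v :: 'm and Ct :: 'o and \<nu> \<mu> :: 'm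
  assumes "category C" and "pointed C"
    and "has_finite_limits C" and "has_finite_colimits C"
    and "wcospan C c"
    \<comment> \<open>W + X + Y, with injections j1, j2, j3\<close>
    and "is_coproduct3 C (wobj c) (lobj c) (robj c) (T, j1, j2, j3)"
    \<comment> \<open>s = [w,x,y]\<close>
    and "s \<in> hom C T (apex c)"
    and "Comp C s j1 = wmap c" and "Comp C s j2 = lmap c" and "Comp C s j3 = rmap c"
    \<comment> \<open>v = \<langle>[\<iota>1,\<iota>2,0],[\<iota>1,0,\<iota>2]\<rangle>\<close>
    and "v \<in> hom C T (PB C (wobj c) (lobj c) (robj c))"
    and "Comp C (pr1 C (wobj c) (lobj c) (robj c)) (Comp C v j1) = inj1 C (wobj c) (lobj c)"
    and "Comp C (pr1 C (wobj c) (lobj c) (robj c)) (Comp C v j2) = inj2 C (wobj c) (lobj c)"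
    and "Comp C (pr1 C (wobj c) (lobj c) (robj c)) (Comp C v j3)
           = zero_map C (robj c) (copObj C (wobj c) (lobj c))"
    and "Comp C (pr2 C (wobj c) (lobj c) (robj c)) (Comp C v j1) = inj1 C (wobj c) (robj c)"
    and "Comp C (pr2 C (wobj c) (lobj c) (robj c)) (Comp C v j2)
           = zero_map C (lobj c) (copObj C (wobj c) (robj c))"
    and "Comp C (pr2 C (wobj c) (lobj c) (robj c)) (Comp C v j3) = inj2 C (wobj c) (robj c)"
    \<comment> \<open>the pushout square, with \<nu> : A -> Ct and \<mu> : PB -> Ct\<close>
    and "is_pushout C s v (Ct, \<nu>, \<mu>)"
  shows "let ct = \<lparr>apex = Ct, lobj = lobj c, lmap = Comp C \<nu> (lmap c),
                   robj = robj c, rmap = Comp C \<nu> (rmap c),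
                   wobj = wobj c, wmap = Comp C \<nu> (wmap c)\<rparr>;
             \<eta> = \<lparr>ma = \<nu>, mf = Id C (lobj c), mg = Id C (robj c), mh = Id C (wobj c)\<rparr>
         in mcs C ct \<mu> \<and> cs_mor C c ct \<eta> \<and>
            (\<forall>c' m' \<phi>. mcs C c' m' \<longrightarrow> cs_mor C c c' \<phi> \<longrightarrow>
               (\<exists>!\<psi>. mcs_mor C ct \<mu> c' m' \<psi> \<and> cs_comp C \<psi> \<eta> = \<phi>))"
  using cctx.main[OF cctx.intro[OF assms(1-4)] assms(5-)] .

end
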